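(* Let $\Sigma$ be an alphabet with $|\Sigma|\geq 3$. Let $f\colon\mathcal{T}(\Sigma)\to\mathcal{T}(\Sigma)$ be WCP and such that $f(\Sigma)\subseteq\Sigma$. Then the restriction of $f$ to $\Sigma$ is either a constant function or the identity.
   Context: Let $\Sigma$ be an alphabet not containing $0,1$. A binary tree over $\Sigma$ is a finite set $t \subseteq \{0,1\}^*\Sigma$ such that for any $ua, vb \in t$ with $ua \neq vb$, $u$ is not a prefix of $v$ and $v$ is not a prefix of $u$; $\mathcal{T}(\Sigma)$ is the set of such trees, $\mathbf 0=\emptyset$, each letter $a$ is identified with $\{a\}$, and $t\star t' = 0.t\cup 1.t'$. Every map $h\colon\Sigma\to\mathcal{T}(\Sigma)$ extends uniquely to an endomorphism of $\langle\mathcal{T}(\Sigma),\star\rangle$, still denoted $h$. A function $g\colon\mathcal{T}(\Sigma)^n\to\mathcal{T}(\Sigma)$ is WCP if for every idempotent mapping $h\colon\Sigma\to\Sigma$ and all $\vec u,\vec v\in\Sigma^n$, $h(\vec u)=h(\vec v)$ implies $h(g(\vec u))=h(g(\vec v))$, where $h(\langle u_1,\ldots,u_n\rangle)=\langle h(u_1),\ldots,h(u_n)\rangle$ (here $n=1$). *)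

theory Defs
  imports Main "HOL-Library.Sublist"
begin

text \<open>Letters of the alphabet Sigma are the elements of a type 'a (disjoint from
the direction symbols 0,1 by construction). A word u a in {0,1}^* Sigma is a pair
(u, a) with u :: bool list (False = 0, True = 1).\<close>

type_synonym 'a tree = "(bool list \<times> 'a) set"

definition is_tree :: "'a tree \<Rightarrow> bool" where
  "is_tree t \<longleftrightarrow> finite t \<and>
     (\<forall>u a v b. (u, a) \<in> t \<longrightarrow> (v, b) \<in> t \<longrightarrow> (u, a) \<noteq> (v, b) \<longrightarrow>
        \<not> prefix u v \<and> \<not> prefix v u)"

definition leaf :: "'a \<Rightarrow> 'a tree" where
  "leaf a = {([], a)}"

definition tstar :: "'a tree \<Rightarrow> 'a tree \<Rightarrow> 'a tree" where
  "tstar t t' = (\<lambda>(u, a). (False # u, a)) ` t \<union> (\<lambda>(u, a). (True # u, a)) ` t'"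

text \<open>Extension of h : Sigma -> T(Sigma) to an endomorphism of (T(Sigma), star):
every leaf u a is replaced by the tree h a grafted at u.\<close>
definition ext :: "('a \<Rightarrow> 'a tree) \<Rightarrow> 'a tree \<Rightarrow> 'a tree" where
  "ext h t = (\<Union>(u, a) \<in> t. (\<lambda>(v, b). (u @ v, b)) ` h a)"

text \<open>WCP for unary functions (n = 1): for every idempotent h : Sigma -> Sigma and
letters u, v, h u = h v implies h(g u) = h(g v), where h acts on trees via its
endomorphic extension.\<close>
definition WCP1 :: "('a tree \<Rightarrow> 'a tree) \<Rightarrow> bool" where
  "WCP1 g \<longleftrightarrow> (\<forall>h :: 'a \<Rightarrow> 'a. h \<circ> h = h \<longrightarrow>
      (\<forall>u v. h u = h v \<longrightarrow> ext (leaf \<circ> h) (g (leaf u)) = ext (leaf \<circ> h) (g (leaf v))))"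

end

theory Submission
  imports Defs
begin

lemma ext_leaf: "ext (leaf \<circ> h) (leaf x) = leaf (h x)"
  unfolding ext_def leaf_def by simp

lemma leaf_inj: "leaf a = leaf b \<Longrightarrow> a = b"
  unfolding leaf_def by simp

lemma pair_cond:
  assumes wcp: "WCP1 f" and g: "\<And>a. f (leaf a) = leaf (g a)" and ab: "a \<noteq> b"
  shows "g a = g b \<or> (g a = a \<and> g b = b) \<or> (g a = b \<and> g b = a)"
proof -
  define h where "h = (\<lambda>x. if x = b then a else x)"
  have hh: "h \<circ> h = h" using ab unfolding h_def by (auto simp: fun_eq_iff)
  have "h a = h b" unfolding h_def by simp
  with wcp hh have "ext (leaf \<circ> h) (f (leaf a)) = ext (leaf \<circ> h) (f (leaf b))"
    unfolding WCP1_def by blast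
  hence "h (g a) = h (g b)" by (simp add: g ext_leaf leaf_inj)
  thus ?thesis unfolding h_def by (auto split: if_splits)
qed

theorem mainTheorem8:
  fixes f :: "'a tree \<Rightarrow> 'a tree"
  assumes card3: "\<exists>a b c :: 'a. a \<noteq> b \<and> b \<noteq> c \<and> a \<noteq> c"
    and trees: "\<forall>t. is_tree t \<longrightarrow> is_tree (f t)"
    and wcp: "WCP1 f"
    and letters: "\<forall>a. \<exists>b. f (leaf a) = leaf b"
  shows "(\<exists>c. \<forall>a. f (leaf a) = leaf c) \<or> (\<forall>a. f (leaf a) = leaf a)"
proof -
  define g where "g a = (SOME b. f (leaf a) = leaf b)" for a
  have g: "f (leaf a) = leaf (g a)" for a
    unfolding g_def by (rule someI_ex) (use letters in blast)
  note P = pair_cond[OF wcp g]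
  show ?thesis
  proof (cases "\<exists>c. \<forall>a. g a = c")
    case True thus ?thesis using g by auto
  next
    case False
    then obtain a b where ab: "g a \<noteq> g b" by blast
    hence anb: "a \<noteq> b" by auto
    have Pab: "(g a = a \<and> g b = b) \<or> (g a = b \<and> g b = a)" using P[OF anb] ab by blast
    have third: "g c = c \<and> g a = a \<and> g b = b" if ca: "c \<noteq> a" and cb: "c \<noteq> b" for c
    proof -
      have Pca: "g c = g a \<or> (g c = c \<and> g a = a) \<or> (g c = a \<and> g a = c)" using P[OF ca] .
      have Pcb: "g c = g b \<or> (g c = c \<and> g b = b) \<or> (g c = b \<and> g b = c)" using P[OF cb] .
      from Pab show ?thesis
      proof
        assume "g a = a \<and> g b = b"
        thus ?thesis using Pca Pcb ca cb anb by auto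
      next
        assume "g a = b \<and> g b = a"
        thus ?thesis using Pca Pcb ca cb anb by auto
      qed
    qed
    obtain x y z :: 'a where xyz: "x \<noteq> y" "y \<noteq> z" "x \<noteq> z" using card3 by blast
    have "\<exists>c. c \<noteq> a \<and> c \<noteq> b"
    proof (cases "x \<noteq> a \<and> x \<noteq> b")
      case True thus ?thesis by blast
    next
      case False
      show ?thesis
      proof (cases "y \<noteq> a \<and> y \<noteq> b")
        case True thus ?thesis by blast
      next
        case False2: False
        have "z \<noteq> a \<and> z \<noteq> b" using False False2 xyz by auto
        thus ?thesis by blast
      qed
    qed
    then obtain c where c: "c \<noteq> a" "c \<noteq> b" by blast
    have ga: "g a = a" and gb: "g b = b" using third[OF c] by auto
    have "g x = x" for x
    proof (cases "x = a \<or> x = b")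
      case True thus ?thesis using ga gb by auto
    next
      case False thus ?thesis using third by blast
    qed
    thus ?thesis using g by simp
  qed
qed

end
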